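(* Let $F$ be a forest, let $k,s\ge 0$ be integers, and for $1\le i\le s$ let $\mathcal{F}_i$ be a set of $s!\,k$ paths of $F$ that are pairwise anticomplete. Then there exist $P^i_1,\ldots,P^i_k\in\mathcal{F}_i$ for $1\le i\le s$ such that these $sk$ paths are pairwise anticomplete.
   Context: Two subgraphs of a graph are anticomplete if their vertex sets are disjoint and no edge of the graph joins a vertex of one to a vertex of the other. *)

theory Defs
  imports Main
begin

definition simple_graph :: "'a set \<Rightarrow> ('a \<Rightarrow> 'a \<Rightarrow> bool) \<Rightarrow> bool" where
  "simple_graph V E \<longleftrightarrow> finite V \<and> (\<forall>x y. E x y \<longrightarrow> x \<in> V \<and> y \<in> V)
     \<and> (\<forall>x y. E x y \<longrightarrow> E y x) \<and> (\<forall>x. \<not> E x x)"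

definition is_cycle :: "'a set \<Rightarrow> ('a \<Rightarrow> 'a \<Rightarrow> bool) \<Rightarrow> 'a list \<Rightarrow> bool" where
  "is_cycle V E c \<longleftrightarrow> length c \<ge> 3 \<and> distinct c \<and> set c \<subseteq> V
     \<and> (\<forall>i. Suc i < length c \<longrightarrow> E (c ! i) (c ! Suc i))
     \<and> E (last c) (hd c)"

definition forest :: "'a set \<Rightarrow> ('a \<Rightarrow> 'a \<Rightarrow> bool) \<Rightarrow> bool" where
  "forest V E \<longleftrightarrow> simple_graph V E \<and> (\<nexists>c. is_cycle V E c)"

definition is_path :: "'a set \<Rightarrow> ('a \<Rightarrow> 'a \<Rightarrow> bool) \<Rightarrow> 'a list \<Rightarrow> bool" where
  "is_path V E p \<longleftrightarrow> p \<noteq> [] \<and> distinct p \<and> set p \<subseteq> V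
     \<and> (\<forall>i. Suc i < length p \<longrightarrow> E (p ! i) (p ! Suc i))"

definition anticomplete :: "('a \<Rightarrow> 'a \<Rightarrow> bool) \<Rightarrow> 'a set \<Rightarrow> 'a set \<Rightarrow> bool" where
  "anticomplete E A B \<longleftrightarrow> A \<inter> B = {} \<and> (\<forall>x\<in>A. \<forall>y\<in>B. \<not> E x y)"

end

theory Submission
  imports Defs
begin

lemma is_path_succ:
  "is_path V E p \<longleftrightarrow> p \<noteq> [] \<and> distinct p \<and> set p \<subseteq> V \<and> successively E p"
  unfolding is_path_def successively_conv_nth by blast

lemma anticomplete_sym:
  assumes "\<forall>x y. E x y \<longrightarrow> E y x" "anticomplete E A B"
  shows "anticomplete E B A"
  using assms unfolding anticomplete_def by blast

lemma leaf_exists: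
  assumes sg: "simple_graph V E" and nc: "\<nexists>c. is_cycle V E c" and ne: "V \<noteq> {}"
  shows "\<exists>v\<in>V. \<forall>x y. E v x \<longrightarrow> E v y \<longrightarrow> x = y"
proof (rule ccontr)
  assume H: "\<not> ?thesis"
  let ?S = "{p. is_path V E p}"
  have finV: "finite V" and sym: "\<forall>x y. E x y \<longrightarrow> E y x" and irr: "\<forall>x. \<not> E x x"
    and inV: "\<forall>x y. E x y \<longrightarrow> x \<in> V \<and> y \<in> V"
    using sg unfolding simple_graph_def by auto
  have fin: "finite ?S"
    by (rule finite_subset[OF _ finite_subset_distinct[OF finV]]) (auto simp: is_path_def)
  obtain x0 where "x0 \<in> V" using ne by blast
  then have "[x0] \<in> ?S" by (simp add: is_path_def)
  then have neS: "length ` ?S \<noteq> {}" by blast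
  obtain p where pS: "p \<in> ?S" and pmax: "length p = Max (length ` ?S)"
    using Max_in[OF finite_imageI[OF fin] neS] by auto
  have pmax': "\<And>q. is_path V E q \<Longrightarrow> length q \<le> length p"
    using pmax fin by (simp add: Max_ge)
  have pp: "is_path V E p" using pS by simp
  then obtain v ps where pv: "p = v # ps" unfolding is_path_def by (cases p) auto
  have vV: "v \<in> V" using pp pv unfolding is_path_def by auto
  obtain x y where xy: "E v x" "E v y" "x \<noteq> y" using H vV by blast
  have inp: "z \<in> set p" if "E v z" for z
  proof (rule ccontr)
    assume "z \<notin> set p"
    moreover have "z \<in> V" using inV that by blast
    moreover have "E z v" using sym that by blast
    ultimately have "is_path V E (z # p)" using pp pv
      by (auto simp: is_path_succ successively_Cons)
    then show False using pmax' by fastforce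
  qed
  have "\<exists>z. E v z \<and> (ps = [] \<or> z \<noteq> hd ps)" using xy by auto
  then obtain z where z: "E v z" "ps = [] \<or> z \<noteq> hd ps" by blast
  have zp: "z \<in> set p" using inp z by blast
  have zv: "z \<noteq> v" using irr z by blast
  obtain j where j: "j < length p" "p ! j = z" using zp by (meson in_set_conv_nth)
  have j0: "j \<noteq> 0" using j zv pv by (cases j) auto
  have j1: "j \<noteq> 1" using j z pv by (cases ps) auto
  define c where "c = take (Suc j) p"
  have succ: "successively E p" using pp by (simp add: is_path_succ)
  have "is_cycle V E c"
    unfolding is_cycle_def
  proof (intro conjI allI impI)
    show "3 \<le> length c" using j j0 j1 by (simp add: c_def)
    show "distinct c" using pp by (simp add: c_def is_path_def)
    show "set c \<subseteq> V" using pp unfolding c_def is_path_def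
      by (meson order_trans set_take_subset)
    fix i assume "Suc i < length c"
    then show "E (c ! i) (c ! Suc i)" using succ j
      by (simp add: c_def successively_nth)
  next
    have "last c = z" using j by (simp add: c_def take_Suc_conv_app_nth)
    moreover have "hd c = v" using pv by (simp add: c_def)
    ultimately show "E (last c) (hd c)" using z sym by blast
  qed
  then show False using nc by blast
qed

lemma succ_restrict:
  "successively E xs \<Longrightarrow> v \<notin> set xs \<Longrightarrow> successively (\<lambda>x y. E x y \<and> x \<noteq> v \<and> y \<noteq> v) xs"
  by (induction xs) (auto simp: successively_Cons)

lemma path_del:
  assumes p: "is_path V E P" and ne: "P \<noteq> [v]"
    and leaf: "\<forall>x y. E v x \<longrightarrow> E v y \<longrightarrow> x = y" and sym: "\<forall>x y. E x y \<longrightarrow> E y x"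
  shows "is_path (V - {v}) (\<lambda>x y. E x y \<and> x \<noteq> v \<and> y \<noteq> v) (removeAll v P)"
proof (cases "v \<in> set P")
  case False
  then show ?thesis using p succ_restrict[of E P v] by (auto simp: is_path_succ)
next
  case True
  then obtain xs ys where P: "P = xs @ v # ys" by (meson split_list)
  have d: "distinct P" using p by (simp add: is_path_def)
  have vx: "v \<notin> set xs" "v \<notin> set ys" using d P by auto
  have rm: "removeAll v P = xs @ ys" using P vx by simp
  have s: "successively E P" using p by (simp add: is_path_succ)
  have sx: "successively E xs" and sy: "successively E ys"
    and ex: "xs \<noteq> [] \<Longrightarrow> E (last xs) v" and ey: "ys \<noteq> [] \<Longrightarrow> E v (hd ys)"
    using s P by (auto simp: successively_append_iff successively_Cons)
  have "xs = [] \<or> ys = []"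
  proof (rule ccontr)
    assume nn: "\<not> ?thesis"
    then have "last xs = hd ys" using ex ey sym leaf by blast
    moreover have "last xs \<in> set xs" "hd ys \<in> set ys" using nn by auto
    ultimately show False using d P by auto
  qed
  moreover have "xs @ ys \<noteq> []" using ne P by auto
  ultimately show ?thesis using rm p P vx sx sy
    succ_restrict[of E xs v] succ_restrict[of E ys v]
    by (auto simp: is_path_succ)
qed

lemma nbr:
  assumes p: "is_path V E P" and "v \<in> set P" and ne: "P \<noteq> [v]" and sym: "\<forall>x y. E x y \<longrightarrow> E y x"
  shows "\<exists>u\<in>set P. E v u"
proof -
  obtain xs ys where P: "P = xs @ v # ys" using assms(2) by (meson split_list)
  have s: "successively E P" using p by (simp add: is_path_succ)
  show ?thesis
  proof (cases ys)
    case Nil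
    then have "xs \<noteq> []" using ne P by auto
    then have "E (last xs) v" using s P Nil by (auto simp: successively_append_iff)
    moreover have "last xs \<in> set P" using P \<open>xs \<noteq> []\<close> by auto
    ultimately show ?thesis using sym by blast
  next
    case (Cons y ys')
    then show ?thesis using s P by (auto simp: successively_append_iff successively_Cons)
  qed
qed

lemma touch_del:
  assumes p: "is_path V E P" and q: "is_path V E Q" and neP: "P \<noteq> [v]" and neQ: "Q \<noteq> [v]"
    and leaf: "\<forall>x y. E v x \<longrightarrow> E v y \<longrightarrow> x = y" and sym: "\<forall>x y. E x y \<longrightarrow> E y x"
    and irr: "\<forall>x. \<not> E x x"
    and t: "\<not> anticomplete E (set P) (set Q)"
  shows "\<not> anticomplete (\<lambda>x y. E x y \<and> x \<noteq> v \<and> y \<noteq> v) (set (removeAll v P)) (set (removeAll v Q))"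
proof -
  have nP: "\<exists>u\<in>set P. E v u" if "v \<in> set P" using nbr[OF p that neP sym] .
  have nQ: "\<exists>u\<in>set Q. E v u" if "v \<in> set Q" using nbr[OF q that neQ sym] .
  from t consider (c) x where "x \<in> set P" "x \<in> set Q"
    | (e) x y where "x \<in> set P" "y \<in> set Q" "E x y"
    unfolding anticomplete_def by blast
  then show ?thesis
  proof cases
    case (c x)
    show ?thesis
    proof (cases "x = v")
      case True
      then obtain u1 u2 where u: "u1 \<in> set P" "u2 \<in> set Q" "E v u1" "E v u2"
        using nP nQ c by blast
      then have "u1 = u2" "u1 \<noteq> v" using leaf irr by blast+
      then have "u1 \<in> set (removeAll v P) \<inter> set (removeAll v Q)" using u by simp
      then show ?thesis unfolding anticomplete_def by blast
    next
      case False
      then have "x \<in> set (removeAll v P) \<inter> set (removeAll v Q)" using c by simp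
      then show ?thesis unfolding anticomplete_def by blast
    qed
  next
    case (e x y)
    show ?thesis
    proof (cases "x = v")
      case True
      then obtain u1 where "u1 \<in> set P" "E v u1" using nP e by blast
      then have "u1 = y" using leaf e True by blast
      moreover have "y \<noteq> v" using e True irr by blast
      ultimately have "y \<in> set (removeAll v P) \<inter> set (removeAll v Q)" using \<open>u1 \<in> set P\<close> e by simp
      then show ?thesis unfolding anticomplete_def by blast
    next
      case False
      show ?thesis
      proof (cases "y = v")
        case True
        then obtain u1 where "u1 \<in> set Q" "E v u1" using nQ e by blast
        then have "u1 = x" using leaf e True sym by blast
        moreover have "x \<noteq> v" using e True irr by blast
        ultimately have "x \<in> set (removeAll v P) \<inter> set (removeAll v Q)" using \<open>u1 \<in> set Q\<close> e by simp
        then show ?thesis unfolding anticomplete_def by blast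
      next
        case False
        then have "x \<in> set (removeAll v P)" "y \<in> set (removeAll v Q)" "E x y \<and> x \<noteq> v \<and> y \<noteq> v"
          using e \<open>x \<noteq> v\<close> by auto
        then show ?thesis unfolding anticomplete_def by blast
      qed
    qed
  qed
qed

lemma core:
  assumes "finite V" "simple_graph V E" "\<nexists>c. is_cycle V E c" "U \<noteq> {}"
    "\<forall>P\<in>U. is_path V E P"
  shows "\<exists>P\<in>U. \<exists>a b. (a = b \<or> E a b) \<and>
           (\<forall>Q\<in>U. \<not> anticomplete E (set P) (set Q) \<longrightarrow> a \<in> set Q \<or> b \<in> set Q)"
  using assms
proof (induction "card V" arbitrary: V E U rule: less_induct)
  case less
  have sym: "\<forall>x y. E x y \<longrightarrow> E y x" and irr: "\<forall>x. \<not> E x x"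
    and inV: "\<forall>x y. E x y \<longrightarrow> x \<in> V \<and> y \<in> V"
    using less.prems(2) unfolding simple_graph_def by auto
  obtain P0 where "P0 \<in> U" using less.prems(4) by blast
  then have "is_path V E P0" using less.prems(5) by blast
  then have "V \<noteq> {}" unfolding is_path_def by (cases P0) auto
  then obtain v where vV: "v \<in> V" and leaf: "\<forall>x y. E v x \<longrightarrow> E v y \<longrightarrow> x = y"
    using leaf_exists[OF less.prems(2) less.prems(3)] by blast
  show ?case
  proof (cases "[v] \<in> U")
    case True
    show ?thesis
    proof (cases "\<exists>w. E v w")
      case True
      then obtain w where w: "E v w" by blast
      have "\<forall>Q\<in>U. \<not> anticomplete E (set [v]) (set Q) \<longrightarrow> v \<in> set Q \<or> w \<in> set Q"
        using w leaf unfolding anticomplete_def by auto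
      then show ?thesis using \<open>[v] \<in> U\<close> w by blast
    next
      case False
      have "\<forall>Q\<in>U. \<not> anticomplete E (set [v]) (set Q) \<longrightarrow> v \<in> set Q \<or> v \<in> set Q"
        using False unfolding anticomplete_def by auto
      then show ?thesis using \<open>[v] \<in> U\<close> by blast
    qed
  next
    case False
    define V' where "V' = V - {v}"
    define E' where "E' = (\<lambda>x y. E x y \<and> x \<noteq> v \<and> y \<noteq> v)"
    define U' where "U' = removeAll v ` U"
    have card: "card V' < card V" using vV less.prems(1) unfolding V'_def
      by (meson card_Diff1_less)
    have fin': "finite V'" using less.prems(1) by (simp add: V'_def)
    have sg': "simple_graph V' E'" using less.prems(2) unfolding simple_graph_def V'_def E'_def
      by auto
    have nc': "\<nexists>c. is_cycle V' E' c"
    proof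
      assume "\<exists>c. is_cycle V' E' c"
      then obtain c where "is_cycle V' E' c" by blast
      then have "is_cycle V E c" unfolding is_cycle_def V'_def E'_def by auto
      then show False using less.prems(3) by blast
    qed
    have ne': "U' \<noteq> {}" using less.prems(4) by (simp add: U'_def)
    have paths': "\<forall>P\<in>U'. is_path V' E' P"
    proof
      fix P' assume "P' \<in> U'"
      then obtain P where "P \<in> U" "P' = removeAll v P" unfolding U'_def by blast
      moreover have "P \<noteq> [v]" using False \<open>P \<in> U\<close> by blast
      ultimately show "is_path V' E' P'"
        using path_del[of V E P v] less.prems(5) leaf sym unfolding V'_def E'_def by blast
    qed
    obtain P' a b where P': "P' \<in> U'" and ab: "a = b \<or> E' a b"
      and prp: "\<forall>Q\<in>U'. \<not> anticomplete E' (set P') (set Q) \<longrightarrow> a \<in> set Q \<or> b \<in> set Q"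
      using less.hyps[OF card fin' sg' nc' ne' paths'] by blast
    obtain P where P: "P \<in> U" "P' = removeAll v P" using P' unfolding U'_def by blast
    have "\<forall>Q\<in>U. \<not> anticomplete E (set P) (set Q) \<longrightarrow> a \<in> set Q \<or> b \<in> set Q"
    proof (intro ballI impI)
      fix Q assume Q: "Q \<in> U" and t: "\<not> anticomplete E (set P) (set Q)"
      have "P \<noteq> [v]" "Q \<noteq> [v]" using False P Q by auto
      then have "\<not> anticomplete E' (set P') (set (removeAll v Q))"
        using touch_del[of V E P Q v] less.prems(5) P Q leaf sym irr t unfolding E'_def by blast
      moreover have "removeAll v Q \<in> U'" using Q by (simp add: U'_def)
      ultimately have "a \<in> set (removeAll v Q) \<or> b \<in> set (removeAll v Q)" using prp by blast
      then show "a \<in> set Q \<or> b \<in> set Q" by auto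
    qed
    moreover have "a = b \<or> E a b" using ab unfolding E'_def by blast
    ultimately show ?thesis using P by blast
  qed
qed

lemma select:
  fixes I :: "nat set" and G :: "nat \<Rightarrow> 'a list set" and d :: "nat \<Rightarrow> nat"
  assumes finV: "finite V" and sg: "simple_graph V E" and nc: "\<nexists>c. is_cycle V E c"
    and finI: "finite I"
    and paths: "\<forall>i\<in>I. \<forall>P\<in>G i. is_path V E P"
    and anti: "\<forall>i\<in>I. \<forall>P\<in>G i. \<forall>Q\<in>G i. P \<noteq> Q \<longrightarrow> anticomplete E (set P) (set Q)"
    and cards: "\<forall>i\<in>I. 0 < d i \<longrightarrow> n \<le> card (G i)"
    and sumd: "(\<Sum>i\<in>I. d i) = n"
  shows "\<exists>Sel. (\<forall>i\<in>I. \<forall>j. 1 \<le> j \<and> j \<le> d i \<longrightarrow> Sel i j \<in> G i)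
     \<and> (\<forall>i\<in>I. \<forall>j. \<forall>i'\<in>I. \<forall>j'. 1 \<le> j \<and> j \<le> d i \<and> 1 \<le> j' \<and> j' \<le> d i' \<and> (i, j) \<noteq> (i', j')
            \<longrightarrow> anticomplete E (set (Sel i j)) (set (Sel i' j')))"
  using paths anti cards sumd
proof (induction n arbitrary: G d)
  case 0
  then have "\<forall>i\<in>I. d i = 0" using finI by simp
  then show ?case
    by (intro exI[of _ "\<lambda>_ _. []"] conjI ballI allI impI) auto
next
  case (Suc m)
  have sym: "\<forall>x y. E x y \<longrightarrow> E y x"
    using sg unfolding simple_graph_def by auto
  define Ip where "Ip = {i\<in>I. 0 < d i}"
  have "Ip \<noteq> {}"
  proof
    assume "Ip = {}"
    then have "\<forall>i\<in>I. d i = 0" unfolding Ip_def by auto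
    then show False using Suc.prems(4) by simp
  qed
  then obtain i1 where i1: "i1 \<in> Ip" by blast
  have finG: "finite (G i)" "G i \<noteq> {}" if "i \<in> Ip" for i
  proof -
    have "Suc m \<le> card (G i)" using Suc.prems(3) that unfolding Ip_def by blast
    then have "0 < card (G i)" by linarith
    then show "finite (G i)" "G i \<noteq> {}" using card_ge_0_finite by auto
  qed
  define U where "U = (\<Union>i\<in>Ip. G i)"
  have Une: "U \<noteq> {}" using finG(2)[OF i1] i1 unfolding U_def by blast
  have Up: "\<forall>P\<in>U. is_path V E P" using Suc.prems(1) unfolding U_def Ip_def by blast
  obtain P where PU: "P \<in> U" and "\<exists>a b. (a = b \<or> E a b) \<and>
           (\<forall>Q\<in>U. \<not> anticomplete E (set P) (set Q) \<longrightarrow> a \<in> set Q \<or> b \<in> set Q)"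
    using core[OF finV sg nc Une Up] by (elim bexE)
  then obtain a b where ab: "a = b \<or> E a b"
    and prp: "\<forall>Q\<in>U. \<not> anticomplete E (set P) (set Q) \<longrightarrow> a \<in> set Q \<or> b \<in> set Q"
    by (elim exE conjE)
  obtain i0 where i0: "i0 \<in> Ip" "P \<in> G i0" using PU unfolding U_def by blast
  define G' where "G' = (\<lambda>i. {Q\<in>G i. anticomplete E (set P) (set Q)})"
  define d' where "d' = d(i0 := d i0 - 1)"
  have i0I: "i0 \<in> I" "0 < d i0" using i0 unfolding Ip_def by auto
  have sumd': "(\<Sum>i\<in>I. d' i) = m"
  proof -
    have "(\<Sum>i\<in>I. d i) = d i0 + (\<Sum>i\<in>I - {i0}. d i)"
      using finI i0I by (simp add: sum.remove)
    moreover have "(\<Sum>i\<in>I. d' i) = d' i0 + (\<Sum>i\<in>I - {i0}. d' i)"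
      using finI i0I by (simp add: sum.remove)
    moreover have "(\<Sum>i\<in>I - {i0}. d' i) = (\<Sum>i\<in>I - {i0}. d i)"
      by (rule sum.cong) (auto simp: d'_def)
    ultimately show ?thesis using Suc.prems(4) i0I by (simp add: d'_def)
  qed
  have cards': "\<forall>i\<in>I. 0 < d' i \<longrightarrow> m \<le> card (G' i)"
  proof (intro ballI impI)
    fix i assume iI: "i \<in> I" and pos: "0 < d' i"
    then have iIp: "i \<in> Ip" unfolding Ip_def d'_def by (auto split: if_splits)
    define X where "X = {Q\<in>G i. \<not> anticomplete E (set P) (set Q)}"
    have XU: "X \<subseteq> U" using iIp unfolding X_def U_def by blast
    have XG: "X \<subseteq> G i" unfolding X_def by blast
    have finX: "finite X" using finG(1)[OF iIp] XG finite_subset by blast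
    have "\<forall>Q1\<in>X. \<forall>Q2\<in>X. Q1 = Q2"
    proof (intro ballI, rule ccontr)
      fix Q1 Q2 assume Q: "Q1 \<in> X" "Q2 \<in> X" "Q1 \<noteq> Q2"
      then have ac: "anticomplete E (set Q1) (set Q2)" using Suc.prems(2) iI XG by blast
      have h1: "a \<in> set Q1 \<or> b \<in> set Q1" and h2: "a \<in> set Q2 \<or> b \<in> set Q2"
        using prp Q XU unfolding X_def by auto
      show False using ac h1 h2 ab sym unfolding anticomplete_def by blast
    qed
    then have "card X \<le> 1" using finX by (simp add: card_le_Suc0_iff_eq)
    moreover have "G' i = G i - X" unfolding G'_def X_def by blast
    moreover have "card (G i - X) = card (G i) - card X"
      using card_Diff_subset[OF finX XG] .
    moreover have "Suc m \<le> card (G i)" using Suc.prems(3) iIp unfolding Ip_def by blast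
    ultimately show "m \<le> card (G' i)" by simp
  qed
  have paths': "\<forall>i\<in>I. \<forall>P\<in>G' i. is_path V E P" using Suc.prems(1) unfolding G'_def by blast
  have anti': "\<forall>i\<in>I. \<forall>P\<in>G' i. \<forall>Q\<in>G' i. P \<noteq> Q \<longrightarrow> anticomplete E (set P) (set Q)"
    using Suc.prems(2) unfolding G'_def by blast
  obtain Sel' where S1: "\<forall>i\<in>I. \<forall>j. 1 \<le> j \<and> j \<le> d' i \<longrightarrow> Sel' i j \<in> G' i"
    and S2: "\<forall>i\<in>I. \<forall>j. \<forall>i'\<in>I. \<forall>j'. 1 \<le> j \<and> j \<le> d' i \<and> 1 \<le> j' \<and> j' \<le> d' i' \<and> (i, j) \<noteq> (i', j')
            \<longrightarrow> anticomplete E (set (Sel' i j)) (set (Sel' i' j'))"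
    using Suc.IH[OF paths' anti' cards' sumd'] by blast
  define Sel where "Sel = (\<lambda>i j. if i = i0 \<and> j = d i0 then P else Sel' i j)"
  have low: "j \<le> d' i" if "j \<le> d i" "(i, j) \<noteq> (i0, d i0)" for i j
    using that unfolding d'_def by auto
  have A: "anticomplete E (set P) (set (Sel' i j))" if "i \<in> I" "1 \<le> j" "j \<le> d i" "(i, j) \<noteq> (i0, d i0)" for i j
    using S1 low[OF that(3,4)] that unfolding G'_def by blast
  show ?case
  proof (intro exI[of _ Sel] conjI ballI allI impI)
    fix i j assume "i \<in> I" "1 \<le> j \<and> j \<le> d i"
    then show "Sel i j \<in> G i"
      using S1 low i0 unfolding Sel_def G'_def by (auto split: if_splits)
  next
    fix i j i' j' assume iI: "i \<in> I" "i' \<in> I"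
      and h: "1 \<le> j \<and> j \<le> d i \<and> 1 \<le> j' \<and> j' \<le> d i' \<and> (i, j) \<noteq> (i', j')"
    show "anticomplete E (set (Sel i j)) (set (Sel i' j'))"
    proof (cases "(i, j) = (i0, d i0)")
      case True
      then have "(i', j') \<noteq> (i0, d i0)" using h by auto
      then show ?thesis using True A[of i' j'] iI h unfolding Sel_def by auto
    next
      case False
      note F = False
      show ?thesis
      proof (cases "(i', j') = (i0, d i0)")
        case True
        then show ?thesis using F A[of i j] iI h anticomplete_sym[OF sym] unfolding Sel_def by auto
      next
        case False
        then show ?thesis using F S2 low iI h unfolding Sel_def by auto
      qed
    qed
  qed
qed

theorem mainTheorem7:
  fixes V :: "'a set" and E :: "'a \<Rightarrow> 'a \<Rightarrow> bool"
    and k s :: nat and Fam :: "nat \<Rightarrow> 'a list set"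
  assumes "forest V E"
    and "\<And>i. 1 \<le> i \<Longrightarrow> i \<le> s \<Longrightarrow> card (Fam i) = fact s * k"
    and "\<And>i P. 1 \<le> i \<Longrightarrow> i \<le> s \<Longrightarrow> P \<in> Fam i \<Longrightarrow> is_path V E P"
    and "\<And>i P Q. 1 \<le> i \<Longrightarrow> i \<le> s \<Longrightarrow> P \<in> Fam i \<Longrightarrow> Q \<in> Fam i \<Longrightarrow> P \<noteq> Q
           \<Longrightarrow> anticomplete E (set P) (set Q)"
  shows "\<exists>Sel :: nat \<Rightarrow> nat \<Rightarrow> 'a list.
           (\<forall>i j. 1 \<le> i \<and> i \<le> s \<and> 1 \<le> j \<and> j \<le> k \<longrightarrow> Sel i j \<in> Fam i)
         \<and> (\<forall>i j i' j'. 1 \<le> i \<and> i \<le> s \<and> 1 \<le> j \<and> j \<le> k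
              \<and> 1 \<le> i' \<and> i' \<le> s \<and> 1 \<le> j' \<and> j' \<le> k \<and> (i, j) \<noteq> (i', j')
              \<longrightarrow> anticomplete E (set (Sel i j)) (set (Sel i' j')))"
proof -
  have sg: "simple_graph V E" and nc: "\<nexists>c. is_cycle V E c" using assms(1) unfolding forest_def by auto
  have finV: "finite V" using sg unfolding simple_graph_def by auto
  have le: "s * k \<le> fact s * k" using fact_ge_self[of s] by (simp add: mult_le_mono1)
  have "\<exists>Sel. (\<forall>i\<in>{1..s}. \<forall>j. 1 \<le> j \<and> j \<le> (\<lambda>_. k) i \<longrightarrow> Sel i j \<in> Fam i)
     \<and> (\<forall>i\<in>{1..s}. \<forall>j. \<forall>i'\<in>{1..s}. \<forall>j'. 1 \<le> j \<and> j \<le> (\<lambda>_. k) i \<and> 1 \<le> j' \<and> j' \<le> (\<lambda>_. k) i' \<and> (i, j) \<noteq> (i', j')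
            \<longrightarrow> anticomplete E (set (Sel i j)) (set (Sel i' j')))"
  proof (rule select[OF finV sg nc, where n = "s * k"])
    show "finite {1..s}" by simp
    show "\<forall>i\<in>{1..s}. \<forall>P\<in>Fam i. is_path V E P" using assms(3) by auto
    show "\<forall>i\<in>{1..s}. \<forall>P\<in>Fam i. \<forall>Q\<in>Fam i. P \<noteq> Q \<longrightarrow> anticomplete E (set P) (set Q)"
      using assms(4) by auto
    show "\<forall>i\<in>{1..s}. 0 < k \<longrightarrow> s * k \<le> card (Fam i)" using assms(2) le by auto
    show "(\<Sum>i\<in>{1..s}. k) = s * k" by simp
  qed
  then obtain Sel where S1: "\<forall>i\<in>{1..s}. \<forall>j. 1 \<le> j \<and> j \<le> k \<longrightarrow> Sel i j \<in> Fam i"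
    and S2: "\<forall>i\<in>{1..s}. \<forall>j. \<forall>i'\<in>{1..s}. \<forall>j'. 1 \<le> j \<and> j \<le> k \<and> 1 \<le> j' \<and> j' \<le> k \<and> (i, j) \<noteq> (i', j')
            \<longrightarrow> anticomplete E (set (Sel i j)) (set (Sel i' j'))" by blast
  show ?thesis
  proof (intro exI[of _ Sel] conjI allI impI)
    fix i j assume h: "1 \<le> i \<and> i \<le> s \<and> 1 \<le> j \<and> j \<le> k"
    then have "i \<in> {1..s}" by simp
    then show "Sel i j \<in> Fam i" using S1 h by blast
  next
    fix i j i' j' assume h: "1 \<le> i \<and> i \<le> s \<and> 1 \<le> j \<and> j \<le> k
              \<and> 1 \<le> i' \<and> i' \<le> s \<and> 1 \<le> j' \<and> j' \<le> k \<and> (i, j) \<noteq> (i', j')"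
    then have "i \<in> {1..s}" "i' \<in> {1..s}" by simp_all
    then show "anticomplete E (set (Sel i j)) (set (Sel i' j'))" using S2 h by blast
  qed
qed

end
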